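(* Let $r\ge2$. (1) Every $r$-large set is $r$-syndetic large. (2) Every $(2r-1)$-syndetic large set is $r$-large.
   Context: For $r\ge2$, $S\subset\mathbb N$ is $r$-large if every coloring of $\mathbb N$ with $r$ colors contains arbitrarily long monochromatic arithmetic progressions $a,a+n,\dots,a+(L-1)n$ with $n\in S$. A set $E\subset\mathbb N$ is syndetic if there is $q\ge1$ such that every interval of $q$ consecutive integers contains an element of $E$; the least such $q$ is its syndeticity constant. $S$ is $r$-syndetic large if every syndetic set with syndeticity constant at most $r$ contains arbitrarily long arithmetic progressions with common difference in $S$. *)

theory Defs
  imports Main
begin

text \<open>Convention: \<open>\<nat>\<close> denotes the positive integers {1,2,...}; sets and colourings
live on the positive naturals.\<close>

definition ap_in :: "nat set \<Rightarrow> nat \<Rightarrow> nat \<Rightarrow> nat \<Rightarrow> bool" where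
  "ap_in A a n L \<longleftrightarrow> (\<forall>i<L. a + i * n \<in> A)"

definition r_large :: "nat \<Rightarrow> nat set \<Rightarrow> bool" where
  "r_large r S \<longleftrightarrow> S \<subseteq> {1..} \<and>
     (\<forall>c :: nat \<Rightarrow> nat. (\<forall>x\<ge>1. c x < r) \<longrightarrow>
        (\<forall>L. \<exists>a n. a \<ge> 1 \<and> n \<in> S \<and> (\<forall>i<L. c (a + i * n) = c a)))"

definition syndetic_with :: "nat \<Rightarrow> nat set \<Rightarrow> bool" where
  "syndetic_with q E \<longleftrightarrow> q \<ge> 1 \<and> (\<forall>m\<ge>1. \<exists>x\<in>E. m \<le> x \<and> x < m + q)"

definition syndetic :: "nat set \<Rightarrow> bool" where
  "syndetic E \<longleftrightarrow> E \<subseteq> {1..} \<and> (\<exists>q. syndetic_with q E)"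

definition syndeticity_constant :: "nat set \<Rightarrow> nat" where
  "syndeticity_constant E = (LEAST q. syndetic_with q E)"

definition r_syndetic_large :: "nat \<Rightarrow> nat set \<Rightarrow> bool" where
  "r_syndetic_large r S \<longleftrightarrow> S \<subseteq> {1..} \<and>
     (\<forall>E. syndetic E \<and> syndeticity_constant E \<le> r \<longrightarrow>
        (\<forall>L. \<exists>a n. n \<in> S \<and> ap_in E a n L))"

end

theory Submission
  imports Defs
begin

lemma part1:
  assumes "r_large r S"
  shows "r_syndetic_large r S"
  unfolding r_syndetic_large_def
proof (intro conjI allI impI)
  show "S \<subseteq> {1..}" using assms unfolding r_large_def by blast
next
  fix E L assume H: "syndetic E \<and> syndeticity_constant E \<le> r"
  define q where "q = syndeticity_constant E"
  have ex: "\<exists>q. syndetic_with q E" using H unfolding syndetic_def by blast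
  have sq: "syndetic_with q E" unfolding q_def syndeticity_constant_def
    using ex by (rule LeastI_ex)
  have qr: "q \<le> r" using H q_def by simp
  define c where "c x = (LEAST d. x + d \<in> E)" for x
  have cx: "x + c x \<in> E \<and> c x < q" if "x \<ge> 1" for x
  proof -
    have "\<forall>m\<ge>1. \<exists>x\<in>E. m \<le> x \<and> x < m + q" using sq unfolding syndetic_with_def by (rule conjunct2)
    hence "\<exists>y\<in>E. x \<le> y \<and> y < x + q" using that by simp
    then obtain y where y: "y \<in> E" "x \<le> y" "y < x + q" by blast
    have e: "x + (y - x) \<in> E" using y by simp
    have "x + c x \<in> E" unfolding c_def using LeastI[of "\<lambda>d. x + d \<in> E", OF e] .
    moreover have "c x \<le> y - x" unfolding c_def using Least_le[of "\<lambda>d. x + d \<in> E", OF e] .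
    ultimately show ?thesis using y by linarith
  qed
  have cr: "\<forall>x\<ge>1. c x < r" using cx qr less_le_trans by blast
  have "\<forall>L. \<exists>a n. a \<ge> 1 \<and> n \<in> S \<and> (\<forall>i<L. c (a + i * n) = c a)"
    using assms cr unfolding r_large_def by (elim conjE allE[of _ c]) (erule mp)
  then obtain a n where an: "a \<ge> 1" "n \<in> S" "\<forall>i<L. c (a + i * n) = c a"
    by blast
  have "ap_in E (a + c a) n L" unfolding ap_in_def
  proof (intro allI impI)
    fix i assume "i < L"
    hence "c (a + i*n) = c a" using an by blast
    moreover have "a + i*n + c (a + i*n) \<in> E" using cx an(1) by simp
    ultimately have "a + i*n + c a \<in> E" by simp
    thus "a + c a + i * n \<in> E" by (simp add: ac_simps)
  qed
  thus "\<exists>a n. n \<in> S \<and> ap_in E a n L" using an by blast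
qed

lemma part2:
  assumes r2: "r \<ge> 2" and SL: "r_syndetic_large (2 * r - 1) S"
  shows "r_large r S"
  unfolding r_large_def
proof (intro conjI allI impI)
  show "S \<subseteq> {1..}" using SL unfolding r_syndetic_large_def by blast
next
  fix c :: "nat \<Rightarrow> nat" and L assume cr: "\<forall>x\<ge>1. c x < r"
  define E where "E = {e. \<exists>x\<ge>1. e = r * x + c x}"
  have dec: "e div r \<ge> 1 \<and> c (e div r) = e mod r \<and> e = r * (e div r) + e mod r" if "e \<in> E" for e
  proof -
    have "\<exists>x\<ge>1. e = r * x + c x" using that unfolding E_def by simp
    then obtain x where x: "x \<ge> 1" "e = r * x + c x" by blast
    have "c x < r" using cr x(1) by simp
    hence "e div r = x" "e mod r = c x" using x(2) r2 by simp_all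
    thus ?thesis using x by simp
  qed
  have sw: "syndetic_with (2 * r - 1) E" unfolding syndetic_with_def
  proof (intro conjI allI impI)
    show "1 \<le> 2 * r - 1" using r2 by simp
  next
    fix m :: nat assume m: "m \<ge> 1"
    show "\<exists>x\<in>E. m \<le> x \<and> x < m + (2 * r - 1)"
    proof (cases "m mod r = 0")
      case True
      define x where "x = m div r"
      have mx: "m = r * x" using True x_def by (metis mult_div_mod_eq add_0_right)
      hence "x \<ge> 1" using m by (cases x) auto
      hence "r * x + c x \<in> E" unfolding E_def by blast
      moreover have "c x < r" using cr \<open>x \<ge> 1\<close> by blast
      ultimately show ?thesis using mx r2 by (intro bexI[of _ "r * x + c x"]) auto
    next
      case False
      define x where "x = m div r + 1"
      have "x \<ge> 1" by (simp add: x_def)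
      hence "r * x + c x \<in> E" unfolding E_def by blast
      moreover have "c x < r" using cr \<open>x \<ge> 1\<close> by blast
      moreover have "r * x = m - m mod r + r" unfolding x_def
        by (simp add: algebra_simps minus_mod_eq_mult_div)
      moreover have "m mod r < r" using r2 by simp
      moreover have "m mod r \<le> m" by simp
      ultimately have "m \<le> r * x + c x" "r * x + c x < m + (2 * r - 1)" "r * x + c x \<in> E"
        using False by linarith+
      thus ?thesis by blast
    qed
  qed
  have synd: "syndetic E" unfolding syndetic_def
  proof
    show "E \<subseteq> {1..}" unfolding E_def using r2
      by (auto intro: order_trans[OF _ le_add1] simp: Suc_le_eq)
    show "\<exists>q. syndetic_with q E" using sw by blast
  qed
  have "syndeticity_constant E \<le> 2 * r - 1" unfolding syndeticity_constant_def
    using Least_le[of "\<lambda>q. syndetic_with q E", OF sw] .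
  then obtain a n where an: "n \<in> S" "ap_in E a n (r * L + 1)"
    using SL synd unfolding r_syndetic_large_def by blast
  have mem: "a + (r * i) * n \<in> E" if "i < L" for i
  proof -
    have "r * i < r * L + 1" using that r2 by (simp add: less_Suc_eq_le)
    thus ?thesis using an(2) unfolding ap_in_def by blast
  qed
  have "\<forall>i<r * L + 1. a + i * n \<in> E" using an(2) unfolding ap_in_def .
  hence "a + 0 * n \<in> E" by (erule_tac x=0 in allE) simp
  hence a0: "a \<in> E" by simp
  have key: "(a + (r * i) * n) div r = a div r + i * n \<and> (a + (r * i) * n) mod r = a mod r" for i
  proof -
    have r0: "r > 0" using r2 by simp
    have eq: "a + (r * i) * n = a + (i * n) * r" by simp
    show ?thesis unfolding eq using r0 by simp
  qed
  show "\<exists>a n. a \<ge> 1 \<and> n \<in> S \<and> (\<forall>i<L. c (a + i * n) = c a)"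
  proof (intro exI conjI allI impI)
    show "a div r \<ge> 1" using dec[OF a0] by blast
    show "n \<in> S" by fact
    fix i assume "i < L"
    have "c ((a + (r * i) * n) div r) = (a + (r * i) * n) mod r" using dec[OF mem[OF \<open>i < L\<close>]] by blast
    thus "c (a div r + i * n) = c (a div r)" using key[of i] dec[OF a0] by simp
  qed
qed

theorem mainTheorem20:
  fixes r :: nat
  assumes "r \<ge> 2"
  shows "(\<forall>S. r_large r S \<longrightarrow> r_syndetic_large r S)
       \<and> (\<forall>S. r_syndetic_large (2 * r - 1) S \<longrightarrow> r_large r S)"
  using part1 part2[OF assms] by blast

end
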